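(* Let $p>3$ be a prime. Then the integral homology $\mathrm{Kh}_{alg}(p,\infty;\mathbb{Z})=H(A_p(\mathbb{Z}),d_2)$ contains a nonzero element of additive order $p$ in the bidegree with $q$-degree $2p+6$ and $t$-degree $2p$.
   Context: For a commutative ring $R$ and $n\ge1$, let $A_n(R)=R[x_0,\dots,x_{n-1}]\otimes_R\Lambda_R[\xi_0,\dots,\xi_{n-1}]$ be the free graded-commutative $R$-algebra on even generators $x_k$ and odd generators $\xi_k$. It is bigraded by declaring $x_k$ to have $q$-degree $2k+2$ and $t$-degree $2k$, and $\xi_k$ to have $q$-degree $2k+4$ and $t$-degree $2k+1$. Let $d_2$ be the unique $R$-linear odd derivation ($d_2(ab)=d_2(a)b+(-1)^{|a|}a\,d_2(b)$, $|a|$ = number of $\xi$'s mod 2) with $d_2(x_k)=0$ and $d_2(\xi_k)=\sum_{i=0}^{k}x_ix_{k-i}$; it preserves $q$-degree and lowers $t$-degree by 1. $\mathrm{Kh}_{alg}(n,\infty;R)=H(A_n(R),d_2)$. *)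

theory Defs
  imports "HOL-Library.Poly_Mapping" "HOL-Computational_Algebra.Primes"
begin

text \<open>A monomial x^e xi_S of A_n: e is the exponent vector of the even generators x_k,
  S the (finite) set of indices of the odd generators xi_k occurring; xi_S denotes the
  product of the xi_k, k in S, in increasing order of k.\<close>

type_synonym kh_mon = "(nat \<Rightarrow>\<^sub>0 nat) \<times> nat set"
type_synonym kh_elt = "kh_mon \<Rightarrow>\<^sub>0 int"

definition kh_valid_mon :: "nat \<Rightarrow> kh_mon \<Rightarrow> bool" where
  "kh_valid_mon n m \<longleftrightarrow> Poly_Mapping.keys (fst m) \<subseteq> {..<n} \<and> snd m \<subseteq> {..<n}"

definition kh_A :: "nat \<Rightarrow> kh_elt set" where
  "kh_A n = {f. \<forall>m\<in>Poly_Mapping.keys f. kh_valid_mon n m}"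

definition kh_qdeg :: "kh_mon \<Rightarrow> nat" where
  "kh_qdeg m = (\<Sum>i\<in>Poly_Mapping.keys (fst m). Poly_Mapping.lookup (fst m) i * (2*i+2)) + (\<Sum>k\<in>snd m. 2*k+4)"

definition kh_tdeg :: "kh_mon \<Rightarrow> nat" where
  "kh_tdeg m = (\<Sum>i\<in>Poly_Mapping.keys (fst m). Poly_Mapping.lookup (fst m) i * (2*i)) + (\<Sum>k\<in>snd m. 2*k+1)"

definition kh_homog :: "nat \<Rightarrow> nat \<Rightarrow> nat \<Rightarrow> kh_elt set" where
  "kh_homog n q t = {f \<in> kh_A n. \<forall>m\<in>Poly_Mapping.keys f. kh_qdeg m = q \<and> kh_tdeg m = t}"

text \<open>d_2 on a monomial: x_k are d-closed, d(xi_j) = sum_{i=0..j} x_i x_{j-i}, and the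
  odd Leibniz rule gives d(x^e xi_S) = sum_{j in S} (-1)^{#{s in S. s<j}} x^e d(xi_j) xi_{S-{j}}.\<close>
definition kh_d_mon :: "kh_mon \<Rightarrow> kh_elt" where
  "kh_d_mon m = (\<Sum>j\<in>snd m. \<Sum>i\<le>j.
      frag_cmul ((-1) ^ card {s\<in>snd m. s < j})
        (frag_of (fst m + Poly_Mapping.single i 1 + Poly_Mapping.single (j - i) 1, snd m - {j})))"

definition kh_d :: "kh_elt \<Rightarrow> kh_elt" where
  "kh_d f = frag_extend kh_d_mon f"

definition kh_cycles :: "nat \<Rightarrow> nat \<Rightarrow> nat \<Rightarrow> kh_elt set" where
  "kh_cycles n q t = {z \<in> kh_homog n q t. kh_d z = 0}"

definition kh_boundaries :: "nat \<Rightarrow> nat \<Rightarrow> nat \<Rightarrow> kh_elt set" where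
  "kh_boundaries n q t = kh_d ` kh_homog n q (t + 1)"

end

theory Submission
  imports Defs
begin

definition kh_psi :: "(nat \<Rightarrow>\<^sub>0 nat) \<Rightarrow> int" where
  "kh_psi e = (if Poly_Mapping.lookup e 0 = 0 then int (Poly_Mapping.lookup e 1)
     else if Poly_Mapping.lookup e 0 = 1 \<and> Poly_Mapping.lookup e 1 = 0 then -1 else 0)"

definition kh_phi :: "kh_mon \<Rightarrow> int" where
  "kh_phi m = (if snd m = {} then kh_psi (fst m) else 0)"

definition PhiF :: "kh_elt \<Rightarrow> int" where
  "PhiF f = Poly_Mapping.lookup (frag_extend (\<lambda>m. frag_cmul (kh_phi m) (frag_of ())) f) ()"

lemma PhiF_of[simp]: "PhiF (frag_of m) = kh_phi m"
  by (simp add: PhiF_def)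
lemma PhiF_add: "PhiF (a + b) = PhiF a + PhiF b"
  by (simp add: PhiF_def frag_extend_add lookup_add)
lemma PhiF_diff: "PhiF (a - b) = PhiF a - PhiF b"
  by (simp add: PhiF_def frag_extend_diff lookup_minus)
lemma PhiF_cmul[simp]: "PhiF (frag_cmul c a) = c * PhiF a"
  by (simp add: PhiF_def frag_extend_cmul)
lemma PhiF_0[simp]: "PhiF 0 = 0"
  by (simp add: PhiF_def)
lemma PhiF_sum: "finite I \<Longrightarrow> PhiF (\<Sum>i\<in>I. g i) = (\<Sum>i\<in>I. PhiF (g i))"
  by (induction I rule: finite_induct) (simp_all add: PhiF_add)

definition Lw :: "(nat \<Rightarrow> nat) \<Rightarrow> (nat \<Rightarrow>\<^sub>0 nat) \<Rightarrow> nat" where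
  "Lw g e = (\<Sum>k\<in>Poly_Mapping.keys e. Poly_Mapping.lookup e k * g k)"

lemma Lw_superset: "finite A \<Longrightarrow> Poly_Mapping.keys e \<subseteq> A \<Longrightarrow>
   Lw g e = (\<Sum>k\<in>A. Poly_Mapping.lookup e k * g k)"
  unfolding Lw_def by (rule sum.mono_neutral_left) (auto simp: in_keys_iff)

lemma Lw_add: "Lw g (a + b) = Lw g a + Lw g b"
proof -
  let ?A = "Poly_Mapping.keys a \<union> Poly_Mapping.keys b"
  have f: "finite ?A" by simp
  have "Lw g (a+b) = (\<Sum>k\<in>?A. Poly_Mapping.lookup (a+b) k * g k)"
    by (rule Lw_superset[OF f]) (rule keys_add)
  also have "\<dots> = (\<Sum>k\<in>?A. Poly_Mapping.lookup a k * g k) + (\<Sum>k\<in>?A. Poly_Mapping.lookup b k * g k)"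
    by (simp add: lookup_add sum.distrib algebra_simps)
  also have "\<dots> = Lw g a + Lw g b"
    using Lw_superset[OF f, of a g] Lw_superset[OF f, of b g] by auto
  finally show ?thesis .
qed

lemma Lw_single: "Lw g (Poly_Mapping.single i 1) = g i"
  by (simp add: Lw_def)

lemma Lw_lin: "Lw (\<lambda>k. g k + h k) e = Lw g e + Lw h e"
  by (simp add: Lw_def sum.distrib algebra_simps)

lemma qdeg_Lw: "kh_qdeg m = Lw (\<lambda>i. 2*i+2) (fst m) + (\<Sum>k\<in>snd m. 2*k+4)"
  by (simp add: kh_qdeg_def Lw_def)
lemma tdeg_Lw: "kh_tdeg m = Lw (\<lambda>i. 2*i) (fst m) + (\<Sum>k\<in>snd m. 2*k+1)"
  by (simp add: kh_tdeg_def Lw_def)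

lemma classify:
  assumes v: "kh_valid_mon n m" and q: "kh_qdeg m = 2*p+6" and t: "kh_tdeg m = 2*p+1"
  shows "\<exists>i j. m = (Poly_Mapping.single i 1, {j}) \<and> i + j = p \<and> i < n \<and> j < n"
proof -
  obtain e S where m: "m = (e, S)" by fastforce
  have fS: "finite S" using v m unfolding kh_valid_mon_def by (auto intro: finite_subset)
  have L1: "Lw (\<lambda>i. 2*i+2) e = Lw (\<lambda>i. 2*i) e + 2 * Lw (\<lambda>_. 1) e"
    using Lw_lin[of "\<lambda>i. 2*i" "\<lambda>_. 2" e] by (simp add: Lw_def sum_distrib_left algebra_simps)
  have L2: "(\<Sum>k\<in>S. 2*k+4) = (\<Sum>k\<in>S. 2*k+1) + 3 * card S"
  proof -
    have "(\<Sum>k\<in>S. 2*k+4) = (\<Sum>k\<in>S. (2*k+1) + 3)" by (simp add: add.commute add.left_commute)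
    also have "\<dots> = (\<Sum>k\<in>S. 2*k+1) + (\<Sum>k\<in>S. 3)" by (rule sum.distrib)
    finally show ?thesis by simp
  qed
  have "2 * Lw (\<lambda>_. 1) e + 3 * card S = 5"
    using q t L1 L2 by (simp add: qdeg_Lw tdeg_Lw m)
  hence D: "Lw (\<lambda>_. 1) e = 1" and C: "card S = 1" by presburger+
  from C obtain j where Sj: "S = {j}" by (auto simp: card_1_singleton_iff)
  have "Poly_Mapping.keys e \<noteq> {}" using D by (auto simp: Lw_def)
  then obtain i where ik: "i \<in> Poly_Mapping.keys e" by blast
  have "Lw (\<lambda>_. 1) e = Poly_Mapping.lookup e i + (\<Sum>k\<in>Poly_Mapping.keys e - {i}. Poly_Mapping.lookup e k)"
    using ik by (simp add: Lw_def sum.remove)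
  moreover have "Poly_Mapping.lookup e i \<ge> 1" using ik by (simp add: in_keys_iff)
  ultimately have li: "Poly_Mapping.lookup e i = 1" and rest: "(\<Sum>k\<in>Poly_Mapping.keys e - {i}. Poly_Mapping.lookup e k) = 0"
    using D by linarith+
  have "Poly_Mapping.keys e - {i} = {}"
  proof (rule ccontr)
    assume "Poly_Mapping.keys e - {i} \<noteq> {}"
    then obtain k where kk: "k \<in> Poly_Mapping.keys e - {i}" by blast
    have "Poly_Mapping.lookup e k = 0" using rest kk by (metis finite_Diff finite_keys sum_eq_0_iff)
    moreover have "Poly_Mapping.lookup e k \<noteq> 0" using kk by (metis DiffD1 in_keys_iff)
    ultimately show False by blast
  qed
  hence ke: "Poly_Mapping.keys e = {i}" using ik by blast
  have e: "e = Poly_Mapping.single i 1"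
  proof (rule poly_mapping_eqI)
    fix k show "Poly_Mapping.lookup e k = Poly_Mapping.lookup (Poly_Mapping.single i 1) k"
    proof (cases "k = i")
      case True thus ?thesis using li by simp
    next
      case False
      hence "k \<notin> Poly_Mapping.keys e" using ke by blast
      hence "Poly_Mapping.lookup e k = 0" by (simp add: in_keys_iff)
      thus ?thesis using False by (simp add: lookup_single_not_eq)
    qed
  qed
  have "2*i + (2*j+1) = 2*p+1" using t Lw_single[of "\<lambda>i. 2*i" i] by (simp add: tdeg_Lw m e Sj)
  moreover have "i < n" "j < n" using v by (auto simp: kh_valid_mon_def m e Sj)
  ultimately have "m = (Poly_Mapping.single i 1, {j}) \<and> i + j = p \<and> i < n \<and> j < n"
    using m e Sj by simp
  thus ?thesis by blast
qed

lemma aux_empty: "{s. s = (j::nat) \<and> s < j} = {}" by auto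

lemma d_mon_single: "kh_d_mon (Poly_Mapping.single i 1, {j}) =
   (\<Sum>l\<le>j. frag_of (Poly_Mapping.single i 1 + Poly_Mapping.single l 1 + Poly_Mapping.single (j-l) 1, {}))"
  by (simp add: kh_d_mon_def aux_empty)

lemma G_case1: assumes "3 \<le> j" "l \<le> j"
  shows "kh_psi (Poly_Mapping.single 1 (1::nat) + Poly_Mapping.single l 1 + Poly_Mapping.single (j-l) 1)
    = (if l \<in> {1..<j} then 1 else 0) + (if l = 1 then 1 else 0) + (if l = j - 1 then 1 else 0)"
proof -
  have "l = 0 \<or> l = j \<or> l = 1 \<or> l = j - 1 \<or> (1 < l \<and> l < j - 1)" using assms by linarith
  thus ?thesis using assms unfolding kh_psi_def
    by (elim disjE; (simp add: lookup_add lookup_single when_def)?; presburger?)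
qed

lemma G_case2: assumes "2 \<le> i" "2 \<le> j" "l \<le> j"
  shows "kh_psi (Poly_Mapping.single i (1::nat) + Poly_Mapping.single l 1 + Poly_Mapping.single (j-l) 1)
    = - (if l = 0 then 1 else 0) - (if l = j then 1 else 0) + (if l = 1 then 1 else 0) + (if l = j - 1 then 1 else 0)"
proof -
  have "l = 0 \<or> l = j \<or> l = 1 \<or> l = j - 1 \<or> (1 < l \<and> l < j - 1)" using assms by linarith
  thus ?thesis using assms unfolding kh_psi_def
    by (elim disjE; (simp add: lookup_add lookup_single when_def)?; presburger?)
qed

lemma G_case3: assumes "2 \<le> i" "l \<le> 1"
  shows "kh_psi (Poly_Mapping.single i (1::nat) + Poly_Mapping.single l 1 + Poly_Mapping.single (1-l) 1) = 0"
proof -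
  have "l = 0 \<or> l = 1" using assms by linarith
  thus ?thesis using assms unfolding kh_psi_def
    by (elim disjE; (simp add: lookup_add lookup_single when_def)?; presburger?)
qed

lemma Phi_dmon_sum: "PhiF (kh_d_mon (Poly_Mapping.single i 1, {j})) =
  (\<Sum>l\<le>j. kh_psi (Poly_Mapping.single i (1::nat) + Poly_Mapping.single l 1 + Poly_Mapping.single (j-l) 1))"
  unfolding d_mon_single by (simp add: PhiF_sum kh_phi_def)

lemma Phi_r: assumes "1 \<le> i" "1 \<le> j" "i + j = p" "3 < p"
  shows "PhiF (kh_d_mon (Poly_Mapping.single i 1, {j})) = (if i = 1 then int p else 0)"
proof (cases "i = 1")
  case True
  hence j3: "3 \<le> j" using assms by linarith
  have "PhiF (kh_d_mon (Poly_Mapping.single i 1, {j})) =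
     (\<Sum>l\<le>j. (if l \<in> {1..<j} then 1 else 0) + (if l = 1 then 1 else 0) + (if l = j - 1 then 1 else 0))"
    unfolding Phi_dmon_sum True by (rule sum.cong) (use G_case1[OF j3] in auto)
  also have "\<dots> = (\<Sum>l\<le>j. (if l \<in> {1..<j} then 1 else 0)) + (\<Sum>l\<le>j. (if l = 1 then 1 else 0)) + (\<Sum>l\<le>j. (if l = j - 1 then (1::int) else 0))"
    by (simp add: sum.distrib)
  also have "(\<Sum>l\<le>j. (if l \<in> {1..<j} then 1 else 0)) = (\<Sum>l\<in>{1..<j}. (1::int))"
    by (rule sum.mono_neutral_cong_right) auto
  finally show ?thesis using True assms j3 by simp
next
  case False
  hence i2: "2 \<le> i" using assms by linarith
  show ?thesis
  proof (cases "j = 1")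
    case True
    show ?thesis unfolding Phi_dmon_sum True using G_case3[OF i2] False by simp
  next
    case False
    hence j2: "2 \<le> j" using assms by linarith
    have "PhiF (kh_d_mon (Poly_Mapping.single i 1, {j})) =
     (\<Sum>l\<le>j. - (if l = 0 then 1 else 0) - (if l = j then 1 else 0) + (if l = 1 then 1 else 0) + (if l = j - 1 then 1 else 0))"
      unfolding Phi_dmon_sum by (rule sum.cong) (use G_case2[OF i2 j2] in auto)
    also have "\<dots> = - (\<Sum>l\<le>j. (if l = 0 then 1 else 0)) - (\<Sum>l\<le>j. (if l = j then 1 else 0)) + (\<Sum>l\<le>j. (if l = 1 then 1 else 0)) + (\<Sum>l\<le>j. (if l = j - 1 then (1::int) else 0))"
      by (simp add: sum.distrib sum_subtractf sum_negf)
    finally show ?thesis using j2 \<open>i \<noteq> 1\<close> by simp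
  qed
qed

lemma kh_d_frag_of[simp]: "kh_d (frag_of m) = kh_d_mon m"
  by (simp add: kh_d_def)
lemma kh_d_diff: "kh_d (a - b) = kh_d a - kh_d b"
  by (simp add: kh_d_def frag_extend_diff)

lemma boundary_dvd:
  assumes f: "f \<in> kh_homog p (2*p+6) (2*p+1)" and p3: "3 < p"
  shows "int p dvd PhiF (kh_d f)"
proof -
  have "Poly_Mapping.keys f \<subseteq> Poly_Mapping.keys f" by simp
  thus ?thesis
  proof (induction f rule: frag_induction)
    case zero thus ?case by (simp add: kh_d_def)
  next
    case (one x)
    have v: "kh_valid_mon p x" and q: "kh_qdeg x = 2*p+6" and t: "kh_tdeg x = 2*p+1"
      using f one by (auto simp: kh_homog_def kh_A_def)
    obtain i j where x: "x = (Poly_Mapping.single i 1, {j})" and ij: "i + j = p" "i < p" "j < p"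
      using classify[OF v q t] by blast
    have "PhiF (kh_d (frag_of x)) = (if i = 1 then int p else 0)"
      unfolding kh_d_frag_of x by (rule Phi_r) (use ij p3 in auto)
    thus ?case by simp
  next
    case (diff a b) thus ?case by (simp add: kh_d_diff PhiF_diff)
  qed
qed

definition kmon :: "nat \<Rightarrow> nat \<Rightarrow> nat \<Rightarrow> kh_mon" where
  "kmon a b c = (Poly_Mapping.single a 1 + Poly_Mapping.single b 1 + Poly_Mapping.single c 1, {})"

lemma kmon_sym1: "kmon a b c = kmon b a c" by (simp add: kmon_def algebra_simps)
lemma kmon_sym2: "kmon a b c = kmon c b a" by (simp add: kmon_def algebra_simps)

definition FF :: "nat \<Rightarrow> kh_elt" where
  "FF p = (\<Sum>i\<in>{1..<p}. frag_cmul (int i) (frag_of (Poly_Mapping.single i 1, {p-i})))"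

lemma d_mon_single': "kh_d_mon (Poly_Mapping.single i 1, {j}) = (\<Sum>l\<le>j. frag_of (kmon i l (j-l)))"
  unfolding d_mon_single kmon_def ..

lemma YY: "kh_d (FF p) = (\<Sum>i\<in>{1..<p}. \<Sum>l\<le>p-i. frag_cmul (int i) (frag_of (kmon i l (p-i-l))))"
  unfolding FF_def kh_d_def frag_extend_sum[OF finite_atLeastLessThan] o_def frag_extend_cmul frag_extend_of
    d_mon_single' frag_cmul_sum by simp

definition Tr :: "nat \<Rightarrow> (nat \<times> nat \<times> nat) set" where
  "Tr p = {(a,b,c). a < p \<and> b < p \<and> c < p \<and> a + b + c = p}"

lemma finite_Tr: "finite (Tr p)"
  by (rule finite_subset[of _ "{..<p} \<times> {..<p} \<times> {..<p}"]) (auto simp: Tr_def)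

lemma sym_sum:
  fixes H :: "nat \<Rightarrow> nat \<Rightarrow> nat \<Rightarrow> int"
  assumes s1: "\<And>a b c. H a b c = H b a c" and s2: "\<And>a b c. H a b c = H c b a"
  shows "3 * (\<Sum>(a,b,c)\<in>Tr p. int a * H a b c) = int p * (\<Sum>(a,b,c)\<in>Tr p. H a b c)"
proof -
  let ?S1 = "(\<Sum>(a,b,c)\<in>Tr p. int a * H a b c)"
  let ?S2 = "(\<Sum>(a,b,c)\<in>Tr p. int b * H a b c)"
  let ?S3 = "(\<Sum>(a,b,c)\<in>Tr p. int c * H a b c)"
  have e2: "?S1 = ?S2"
    by (rule sum.reindex_bij_witness[of _ "\<lambda>(a,b,c). (b,a,c)" "\<lambda>(a,b,c). (b,a,c)"])
       (auto simp: Tr_def s1[symmetric])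
  have e3: "?S1 = ?S3"
    by (rule sum.reindex_bij_witness[of _ "\<lambda>(a,b,c). (c,b,a)" "\<lambda>(a,b,c). (c,b,a)"])
       (auto simp: Tr_def s2[symmetric])
  have "?S1 + ?S2 + ?S3 = (\<Sum>(a,b,c)\<in>Tr p. (int a + int b + int c) * H a b c)"
    by (simp add: sum.distrib[symmetric] case_prod_beta algebra_simps)
  also have "\<dots> = (\<Sum>(a,b,c)\<in>Tr p. int p * H a b c)"
    by (rule sum.cong) (auto simp: Tr_def simp flip: of_nat_add)
  also have "\<dots> = int p * (\<Sum>(a,b,c)\<in>Tr p. H a b c)"
    by (simp add: sum_distrib_left case_prod_beta)
  finally show ?thesis using e2 e3 by simp
qed

lemma lookup_Y_Tr: "Poly_Mapping.lookup (kh_d (FF p)) m =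
  (\<Sum>(a,b,c)\<in>Tr p. int a * (if m = kmon a b c then 1 else 0))"
proof -
  let ?G = "\<lambda>(a,b,c). int a * (if m = kmon a b c then 1 else (0::int))"
  let ?I = "Sigma {1..<p} (\<lambda>i. {..p-i})"
  let ?f = "\<lambda>(i,l). (i, l, p-i-l)"
  have "Poly_Mapping.lookup (kh_d (FF p)) m = (\<Sum>i\<in>{1..<p}. \<Sum>l\<le>p-i. ?G (i, l, p-i-l))"
    unfolding YY by (simp add: lookup_sum)
  also have "\<dots> = (\<Sum>(i,l)\<in>?I. ?G (?f (i,l)))"
    by (subst sum.Sigma) auto
  also have "\<dots> = sum ?G (?f ` ?I)"
    by (subst sum.reindex) (auto simp: inj_on_def case_prod_beta)
  also have "?f ` ?I = Tr p \<inter> {t. 1 \<le> fst t}"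
  proof
    show "?f ` ?I \<subseteq> Tr p \<inter> {t. 1 \<le> fst t}" by (auto simp: Tr_def)
    show "Tr p \<inter> {t. 1 \<le> fst t} \<subseteq> ?f ` ?I"
    proof
      fix t assume t: "t \<in> Tr p \<inter> {t. 1 \<le> fst t}"
      obtain a b c where abc: "t = (a,b,c)" by (cases t) auto
      have "(a,b) \<in> ?I" "t = ?f (a,b)" using t abc by (auto simp: Tr_def)
      thus "t \<in> ?f ` ?I" by blast
    qed
  qed
  also have "sum ?G (Tr p \<inter> {t. 1 \<le> fst t}) = sum ?G (Tr p)"
    by (rule sum.mono_neutral_left) (auto simp: finite_Tr)
  finally show ?thesis .
qed

lemma Y_dvd: assumes "prime p" "3 < p" shows "int p dvd Poly_Mapping.lookup (kh_d (FF p)) m"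
proof -
  let ?H = "\<lambda>a b c. (if m = kmon a b c then 1 else 0::int)"
  have "3 * Poly_Mapping.lookup (kh_d (FF p)) m = int p * (\<Sum>(a,b,c)\<in>Tr p. ?H a b c)"
    unfolding lookup_Y_Tr by (rule sym_sum) (metis kmon_sym1, metis kmon_sym2)
  hence d: "int p dvd 3 * Poly_Mapping.lookup (kh_d (FF p)) m" by simp
  have pr: "prime (int p)" using assms by simp
  have "\<not> int p dvd 3"
  proof
    assume "int p dvd 3"
    hence "int p \<le> 3" by (rule zdvd_imp_le) simp
    thus False using assms by simp
  qed
  thus ?thesis using d pr prime_dvd_mult_iff by blast
qed

lemma FF_homog: "FF p \<in> kh_homog p (2*p+6) (2*p+1)"
proof -
  have k: "Poly_Mapping.keys (FF p) \<subseteq> (\<Union>i\<in>{1..<p}. {(Poly_Mapping.single i 1, {p-i})})"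
  proof -
    have "Poly_Mapping.keys (FF p) \<subseteq> (\<Union>i\<in>{1..<p}. Poly_Mapping.keys (frag_cmul (int i) (frag_of (Poly_Mapping.single i 1, {p-i}))))"
      unfolding FF_def by (rule keys_sum)
    also have "\<dots> \<subseteq> (\<Union>i\<in>{1..<p}. {(Poly_Mapping.single i 1, {p-i})})"
      apply (rule UN_mono[OF order.refl]) using keys_cmul keys_frag_of by metis
    finally show ?thesis .
  qed
  have h: "kh_valid_mon p m \<and> kh_qdeg m = 2*p+6 \<and> kh_tdeg m = 2*p+1"
    if mk: "m \<in> Poly_Mapping.keys (FF p)" for m
  proof -
    obtain i where i: "i \<in> {1..<p}" and m: "m = (Poly_Mapping.single i 1, {p-i})" using k mk by blast
    have "kh_qdeg m = (2*i+2) + (2*(p-i)+4)" unfolding m qdeg_Lw fst_conv snd_conv Lw_single by simp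
    moreover have "kh_tdeg m = 2*i + (2*(p-i)+1)" unfolding m tdeg_Lw fst_conv snd_conv Lw_single by simp
    moreover have "kh_valid_mon p m" using i by (simp add: m kh_valid_mon_def)
    ultimately show ?thesis using i by auto
  qed
  thus ?thesis by (auto simp: kh_homog_def kh_A_def)
qed

lemma keys_Y: "Poly_Mapping.keys (kh_d (FF p)) \<subseteq> (\<Union>i\<in>{1..<p}. \<Union>l\<in>{..p-i}. {kmon i l (p-i-l)})"
proof -
  have "Poly_Mapping.keys (kh_d (FF p)) \<subseteq> (\<Union>i\<in>{1..<p}. Poly_Mapping.keys (\<Sum>l\<le>p-i. frag_cmul (int i) (frag_of (kmon i l (p-i-l)))))"
    unfolding YY by (rule keys_sum)
  also have "\<dots> \<subseteq> (\<Union>i\<in>{1..<p}. \<Union>l\<in>{..p-i}. Poly_Mapping.keys (frag_cmul (int i) (frag_of (kmon i l (p-i-l)))))"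
    by (rule UN_mono[OF order.refl]) (rule keys_sum)
  also have "\<dots> \<subseteq> (\<Union>i\<in>{1..<p}. \<Union>l\<in>{..p-i}. {kmon i l (p-i-l)})"
    apply (rule UN_mono[OF order.refl])+ using keys_cmul keys_frag_of by metis
  finally show ?thesis .
qed

lemma kmon_deg: "kh_qdeg (kmon a b c) = 2*(a+b+c)+6" "kh_tdeg (kmon a b c) = 2*(a+b+c)"
  unfolding kmon_def qdeg_Lw tdeg_Lw fst_conv snd_conv Lw_add Lw_single by simp_all

lemma kmon_valid: "a < n \<Longrightarrow> b < n \<Longrightarrow> c < n \<Longrightarrow> kh_valid_mon n (kmon a b c)"
proof -
  assume abc: "a < n" "b < n" "c < n"
  have k: "Poly_Mapping.keys (Poly_Mapping.single a (1::nat) + Poly_Mapping.single b 1 + Poly_Mapping.single c 1)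
     \<subseteq> Poly_Mapping.keys (Poly_Mapping.single a (1::nat)) \<union> Poly_Mapping.keys (Poly_Mapping.single b (1::nat)) \<union> Poly_Mapping.keys (Poly_Mapping.single c (1::nat))"
    using keys_add[of "Poly_Mapping.single a (1::nat) + Poly_Mapping.single b 1" "Poly_Mapping.single c 1"]
        keys_add[of "Poly_Mapping.single a (1::nat)" "Poly_Mapping.single b 1"] by blast
  have "Poly_Mapping.keys (Poly_Mapping.single a (1::nat)) \<union> Poly_Mapping.keys (Poly_Mapping.single b (1::nat)) \<union> Poly_Mapping.keys (Poly_Mapping.single c (1::nat)) \<subseteq> {..<n}"
    using abc by (simp only: keys_single one_neq_zero if_False) blast
  with k show ?thesis unfolding kmon_def kh_valid_mon_def fst_conv snd_conv by blast
qed

definition zz :: "nat \<Rightarrow> kh_elt" where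
  "zz p = Poly_Mapping.map (\<lambda>c. c div int p) (kh_d (FF p))"

lemma lookup_zz: "Poly_Mapping.lookup (zz p) m = Poly_Mapping.lookup (kh_d (FF p)) m div int p"
  by (simp add: zz_def map.rep_eq when_def)

lemma keys_zz: "Poly_Mapping.keys (zz p) \<subseteq> Poly_Mapping.keys (kh_d (FF p))"
  by (auto simp: in_keys_iff lookup_zz)

lemma zz_cmul: assumes "prime p" "3 < p" shows "frag_cmul (int p) (zz p) = kh_d (FF p)"
  by (rule poly_mapping_eqI) (simp add: lookup_zz Y_dvd[OF assms])

lemma zz_homog: "zz p \<in> kh_homog p (2*p+6) (2*p)"
proof -
  have "kh_valid_mon p m \<and> kh_qdeg m = 2*p+6 \<and> kh_tdeg m = 2*p \<and> snd m = {}"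
    if mk: "m \<in> Poly_Mapping.keys (zz p)" for m
  proof -
    obtain i l where i: "i \<in> {1..<p}" "l \<le> p - i" and m: "m = kmon i l (p-i-l)"
      using keys_zz[of p] keys_Y[of p] mk by blast
    have "i + l + (p-i-l) = p" using i by auto
    thus ?thesis using i by (auto simp: m kmon_deg intro!: kmon_valid) (simp add: kmon_def)
  qed
  thus ?thesis by (auto simp: kh_homog_def kh_A_def)
qed

lemma zz_cycle: "kh_d (zz p) = 0"
proof -
  have "snd m = {}" if mk: "m \<in> Poly_Mapping.keys (zz p)" for m
  proof -
    obtain i l where m: "m = kmon i l (p-i-l)"
      using keys_zz[of p] keys_Y[of p] mk by blast
    thus ?thesis by (simp add: kmon_def)
  qed
  thus ?thesis unfolding kh_d_def by (intro frag_extend_eq_0) (simp add: kh_d_mon_def)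
qed

lemma Phi_Y: assumes "3 < p" shows "PhiF (kh_d (FF p)) = int p"
proof -
  have "PhiF (kh_d (FF p)) = (\<Sum>i\<in>{1..<p}. int i * PhiF (kh_d_mon (Poly_Mapping.single i 1, {p-i})))"
    unfolding FF_def kh_d_def frag_extend_sum[OF finite_atLeastLessThan] o_def frag_extend_cmul frag_extend_of
    by (simp add: PhiF_sum)
  also have "\<dots> = (\<Sum>i\<in>{1..<p}. (if i = 1 then int p else 0))"
    by (rule sum.cong) (use assms Phi_r in auto)
  also have "\<dots> = int p" using assms by simp
  finally show ?thesis .
qed

theorem mainTheorem2:
  fixes p :: nat
  assumes "prime p" and "p > 3"
  shows "\<exists>z \<in> kh_cycles p (2*p+6) (2*p).
           frag_cmul (int p) z \<in> kh_boundaries p (2*p+6) (2*p) \<and>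
           (\<forall>k::nat. 0 < k \<and> k < p \<longrightarrow> frag_cmul (int k) z \<notin> kh_boundaries p (2*p+6) (2*p))"
proof (intro bexI conjI allI impI)
  show "zz p \<in> kh_cycles p (2*p+6) (2*p)"
    using zz_homog zz_cycle by (simp add: kh_cycles_def)
  show "frag_cmul (int p) (zz p) \<in> kh_boundaries p (2*p+6) (2*p)"
    unfolding kh_boundaries_def zz_cmul[OF assms] using FF_homog by simp
  have "int p * PhiF (zz p) = int p"
    using Phi_Y[OF assms(2)] zz_cmul[OF assms] by (metis PhiF_cmul)
  hence P1: "PhiF (zz p) = 1" using assms(2) by simp
  fix k :: nat assume k: "0 < k \<and> k < p"
  show "frag_cmul (int k) (zz p) \<notin> kh_boundaries p (2*p+6) (2*p)"
  proof
    assume "frag_cmul (int k) (zz p) \<in> kh_boundaries p (2*p+6) (2*p)"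
    then obtain g where g: "g \<in> kh_homog p (2*p+6) (2*p+1)" and e: "frag_cmul (int k) (zz p) = kh_d g"
      by (auto simp: kh_boundaries_def)
    have "int p dvd PhiF (kh_d g)" by (rule boundary_dvd[OF g assms(2)])
    hence "int p dvd int k" using e P1 by (metis PhiF_cmul mult.right_neutral)
    hence "p dvd k" by simp
    thus False using k by (simp add: nat_dvd_not_less)
  qed
qed

end
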